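(* Let $\sigma>0$. If $f=\sum_{n\in\mathbb N_0^d}a_n(f)l_n\in\mathcal G_{\flat_\sigma}(\mathbb R^d_+)$, then $f\circ v\in\mathcal H_{\flat_\sigma,even}(\mathbb R^d)$ and $f\circ v=\sum_{n\in\mathbb N_0^d}b_{2n}h_{2n}$, where $\{b_{2n}\}_{n\in\mathbb N_0^d}\in\ell_{\flat_\sigma}(\mathbb N_0^d)$ is given by $$b_{2n}=\frac{(-1)^{|n|}\pi^{d/4}\sqrt{(2n)!}}{2^{|n|}n!}\sum_{k\in\mathbb N_0^d}a_{k+n}(f)\binom{k-\mathbf{1/2}}{k},\quad n\in\mathbb N_0^d.$$
   Context: $\mathbb R^d_+=(0,\infty)^d$; $v(x)=(x_1^2,\dots,x_d^2)$ for $x\in\mathbb R^d$. Multi-indices: $|n|=\sum n_j$, $n!=\prod n_j!$, $2n=(2n_1,\dots,2n_d)$, $\mathbf{1/2}=(1/2,\dots,1/2)$, $\binom{\gamma}{m}=\prod_j\frac{\gamma_j(\gamma_j-1)\cdots(\gamma_j-m_j+1)}{m_j!}$. Laguerre functions $l_n(x)=\prod_jL_{n_j}(x_j)e^{-x_j/2}$ on $[0,\infty)^d$ with $L_m(t)=\frac{e^t}{m!}\frac{d^m}{dt^m}(e^{-t}t^m)$; Hermite functions $h_n(x)=\prod_j(2^{n_j}n_j!\sqrt\pi)^{-1/2}e^{-x_j^2/2}H_{n_j}(x_j)$, $H_m(t)=(-1)^me^{t^2}\frac{d^m}{dt^m}e^{-t^2}$. For $\tau>0$, $\ell_{\flat_\tau}(\mathbb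 N_0^d)$ is the set of complex sequences $\{a_n\}$ such that $\sup_n|a_n|h^{|n|}n!^{1/(2\tau)}<\infty$ for some $h>0$. $\mathcal G_{\flat_\sigma}(\mathbb R^d_+)$ is the space of functions $f=\sum_na_nl_n$ (absolutely convergent series) with $\{a_n\}\in\ell_{\flat_{\sigma/2}}(\mathbb N_0^d)$, and $a_n(f)=a_n$. $\mathcal H_{\flat_\sigma}(\mathbb R^d)$ is the space of $\sum_na_nh_n$ with $\{a_n\}\in\ell_{\flat_\sigma}(\mathbb N_0^d)$, and $\mathcal H_{\flat_\sigma,even}(\mathbb R^d)$ its subspace of functions invariant under changing the sign of any single coordinate. The notation $\{b_{2n}\}_n\in\ell_{\flat_\sigma}(\mathbb N_0^d)$ means that the sequence equal to $b_k$ at $k=2n$ and $0$ elsewhere belongs to $\ell_{\flat_\sigma}(\mathbb N_0^d)$. *)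

theory Defs
  imports "HOL-Analysis.Analysis"
begin

text \<open>Multi-indices in N_0^d are functions 'd \<Rightarrow> nat for a finite index type 'd
  (d = CARD('d)); points of R^d are functions 'd \<Rightarrow> real.\<close>

definition mi_abs :: "('d::finite \<Rightarrow> nat) \<Rightarrow> nat" where
  "mi_abs n = (\<Sum>j\<in>UNIV. n j)"

definition mi_fact :: "('d::finite \<Rightarrow> nat) \<Rightarrow> real" where
  "mi_fact n = (\<Prod>j\<in>UNIV. fact (n j))"

definition vsq :: "('d::finite \<Rightarrow> real) \<Rightarrow> ('d \<Rightarrow> real)" where
  "vsq x = (\<lambda>j. (x j)^2)"

definition laguerre_poly :: "nat \<Rightarrow> real \<Rightarrow> real" where
  "laguerre_poly m t = exp t / fact m * ((deriv ^^ m) (\<lambda>s. exp (- s) * s ^ m)) t"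

definition laguerre_fun :: "('d::finite \<Rightarrow> nat) \<Rightarrow> ('d \<Rightarrow> real) \<Rightarrow> real" where
  "laguerre_fun n x = (\<Prod>j\<in>UNIV. laguerre_poly (n j) (x j) * exp (- x j / 2))"

definition hermite_poly :: "nat \<Rightarrow> real \<Rightarrow> real" where
  "hermite_poly m t = (-1) ^ m * exp (t^2) * ((deriv ^^ m) (\<lambda>s. exp (- (s^2)))) t"

definition hermite_fun :: "('d::finite \<Rightarrow> nat) \<Rightarrow> ('d \<Rightarrow> real) \<Rightarrow> real" where
  "hermite_fun n x = (\<Prod>j\<in>UNIV. inverse (sqrt (2 ^ n j * fact (n j) * sqrt pi))
                          * exp (- ((x j)^2) / 2) * hermite_poly (n j) (x j))"

definition ell_flat :: "real \<Rightarrow> (('d::finite \<Rightarrow> nat) \<Rightarrow> complex) set" where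
  "ell_flat \<tau> = {a. \<exists>h>0. bdd_above (range (\<lambda>n. norm (a n) * h ^ mi_abs n * mi_fact n powr (1 / (2 * \<tau>))))}"

definition H_flat :: "real \<Rightarrow> (('d::finite \<Rightarrow> real) \<Rightarrow> complex) set" where
  "H_flat \<sigma> = {g. \<exists>c \<in> ell_flat \<sigma>. \<forall>x.
      (\<lambda>n. c n * complex_of_real (hermite_fun n x)) summable_on UNIV \<and>
      g x = (\<Sum>\<^sub>\<infinity>n. c n * complex_of_real (hermite_fun n x))}"

definition H_flat_even :: "real \<Rightarrow> (('d::finite \<Rightarrow> real) \<Rightarrow> complex) set" where
  "H_flat_even \<sigma> = {g \<in> H_flat \<sigma>. \<forall>x j. g (x(j := - x j)) = g x}"

end

theory Submission
  imports Defs "HOL-Computational_Algebra.Polynomial" "HOL-Computational_Algebra.Formal_Power_Series"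
begin


definition lagD :: "real poly \<Rightarrow> real poly" where
  "lagD p = pderiv p - p"

lemma deriv_lag_step:
  "deriv (\<lambda>s. exp (- s) * poly p s) = (\<lambda>s. exp (- s) * poly (lagD p) s)"
proof
  fix s :: real
  have "((\<lambda>s. exp (- s) * poly p s) has_real_derivative
        (exp (- s) * (- 1)) * poly p s + exp (- s) * poly (pderiv p) s) (at s)"
    by (auto intro!: derivative_eq_intros)
  then show "deriv (\<lambda>s. exp (- s) * poly p s) s = exp (- s) * poly (lagD p) s"
    by (auto dest!: DERIV_imp_deriv simp: lagD_def algebra_simps)
qed

lemma deriv_lag_iter:
  "(deriv ^^ j) (\<lambda>s. exp (- s) * poly p s) = (\<lambda>s. exp (- s) * poly ((lagD ^^ j) p) s)"
  by (induction j) (simp_all add: deriv_lag_step)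

lemma coeff_lagD: "coeff (lagD p) l = real (Suc l) * coeff p (Suc l) - coeff p l"
  by (simp add: lagD_def coeff_pderiv)

lemma coeff_lag_iter:
  "coeff ((lagD ^^ j) (monom 1 m)) l =
     (if l \<le> m then real (j choose (m - l)) * (-1) ^ (j + m + l) * fact m / fact l else 0)"
proof (induction j arbitrary: l)
  case 0
  then show ?case by (auto simp: coeff_monom)
next
  case (Suc j)
  show ?case
  proof (cases "l \<le> m")
    case False
    then show ?thesis using Suc by (simp add: coeff_lagD)
  next
    case True
    note l = True
    show ?thesis
    proof (cases "l = m")
      case True
      then show ?thesis using Suc by (simp add: coeff_lagD)
    next
      case False
      then have lm: "Suc l \<le> m" using l by simp
      have e: "m - l = Suc (m - Suc l)" using lm by simp
      have f: "real (Suc l) / fact (Suc l) = (1::real) / fact l" by simp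
      have "coeff ((lagD ^^ Suc j) (monom 1 m)) l =
          real (Suc l) * (real (j choose (m - Suc l)) * (-1) ^ (j + m + Suc l) * fact m / fact (Suc l))
          - real (j choose (m - l)) * (-1) ^ (j + m + l) * fact m / fact l"
        using Suc lm l by (simp add: coeff_lagD)
      also have "\<dots> = (real (Suc l) / fact (Suc l)) * (real (j choose (m - Suc l)) * (-1) ^ (j + m + Suc l) * fact m)
          - real (j choose (m - l)) * (-1) ^ (j + m + l) * fact m / fact l"
        by simp
      also have "\<dots> = (real (j choose (m - Suc l)) + real (j choose (m - l))) * (-1) ^ (Suc j + m + l) * fact m / fact l"
        unfolding f by (simp add: field_simps)
      also have "real (j choose (m - Suc l)) + real (j choose (m - l)) = real (Suc j choose (m - l))"
        unfolding e by simp
      finally show ?thesis using l by simp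
    qed
  qed
qed

lemma poly_sum_le:
  fixes p :: "real poly"
  assumes "\<And>i. i > n \<Longrightarrow> coeff p i = 0"
  shows "poly p x = (\<Sum>i\<le>n. coeff p i * x ^ i)"
proof -
  have d: "degree p \<le> n" using assms by (intro degree_le) auto
  have "poly p x = (\<Sum>i\<le>degree p. coeff p i * x ^ i)" by (rule poly_altdef)
  also have "\<dots> = (\<Sum>i\<le>n. coeff p i * x ^ i)"
    using d assms by (intro sum.mono_neutral_left) (auto simp: coeff_eq_0)
  finally show ?thesis .
qed

lemma laguerre_poly_explicit:
  "laguerre_poly m t = (\<Sum>l\<le>m. real (m choose l) * (-1) ^ l * t ^ l / fact l)"
proof -
  have fn: "(\<lambda>s::real. exp (- s) * s ^ m) = (\<lambda>s. exp (- s) * poly (monom 1 m) s)"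
    by (simp add: poly_monom)
  have "laguerre_poly m t = exp t / fact m * (exp (- t) * poly ((lagD ^^ m) (monom 1 m)) t)"
    unfolding laguerre_poly_def fn deriv_lag_iter by simp
  also have "poly ((lagD ^^ m) (monom 1 m)) t =
      (\<Sum>l\<le>m. (real (m choose (m - l)) * (-1) ^ (m + m + l) * fact m / fact l) * t ^ l)"
    by (subst poly_sum_le[of m]) (auto simp: coeff_lag_iter)
  also have "\<dots> = (\<Sum>l\<le>m. fact m * (real (m choose l) * (-1) ^ l * t ^ l / fact l))"
  proof (intro sum.cong refl)
    fix l assume "l \<in> {..m}"
    then have "m choose (m - l) = m choose l" by (simp add: binomial_symmetric[symmetric])
    moreover have "(-1::real) ^ (m + m + l) = (-1) ^ l"
      by (simp add: power_add flip: mult_2)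
    ultimately show "real (m choose (m - l)) * (- 1) ^ (m + m + l) * fact m / fact l * t ^ l =
         fact m * (real (m choose l) * (- 1) ^ l * t ^ l / fact l)" by simp
  qed
  also have "\<dots> = fact m * (\<Sum>l\<le>m. real (m choose l) * (-1) ^ l * t ^ l / fact l)"
    by (simp add: sum_distrib_left)
  finally show ?thesis
    by (simp add: exp_minus)
qed



definition herD :: "real poly \<Rightarrow> real poly" where
  "herD p = pderiv p - smult 2 (pCons 0 p)"

lemma deriv_her_step:
  "deriv (\<lambda>s. exp (- (s^2)) * poly p s) = (\<lambda>s. exp (- (s^2)) * poly (herD p) s)"
proof
  fix s :: real
  have "((\<lambda>s. exp (- (s^2)) * poly p s) has_real_derivative
        (exp (- (s^2)) * (- (2 * s))) * poly p s + exp (- (s^2)) * poly (pderiv p) s) (at s)"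
    by (auto intro!: derivative_eq_intros)
  then show "deriv (\<lambda>s. exp (- (s^2)) * poly p s) s = exp (- (s^2)) * poly (herD p) s"
    by (auto dest!: DERIV_imp_deriv simp: herD_def algebra_simps)
qed

lemma deriv_her_iter:
  "(deriv ^^ j) (\<lambda>s. exp (- (s^2)) * poly p s) = (\<lambda>s. exp (- (s^2)) * poly ((herD ^^ j) p) s)"
  by (induction j) (simp_all add: deriv_her_step)

lemma coeff_herD: "coeff (herD p) j = real (Suc j) * coeff p (Suc j) - 2 * (case j of 0 \<Rightarrow> 0 | Suc i \<Rightarrow> coeff p i)"
  by (simp add: herD_def coeff_pderiv coeff_pCons split: nat.split)

definition hT :: "nat \<Rightarrow> nat \<Rightarrow> real" where
  "hT k i = (-1) ^ (i + k) * 2 ^ i * fact (2 * k + i) / (fact k * fact i)"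

lemma hT_alg:
  fixes a b K s p F fk fi :: real
  assumes "a \<noteq> 0" "b \<noteq> 0" "K \<noteq> 0" "fk \<noteq> 0" "fi \<noteq> 0"
  shows "a * (s * (4 * p) * F / (fk * (a * (b * fi)))) - 2 * ((- s) * p * F / ((K * fk) * fi))
       = s * (2 * p) * ((2 * K + b) * F) / ((K * fk) * (b * fi))"
  using assms by (simp add: field_simps)

lemma hT_step:
  "real (Suc (Suc i)) * hT k' (Suc (Suc i)) - 2 * hT (Suc k') i = hT (Suc k') (Suc i)"
proof -
  define F where "F = (fact (2 * Suc k' + i) :: real)"
  have 1: "fact (2 * k' + Suc (Suc i)) = F" unfolding F_def by (simp add: algebra_simps)
  have 2: "fact (2 * Suc k' + Suc i) = (2 * real (Suc k') + real (Suc i)) * F"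
    unfolding F_def by simp
  have 3: "fact (Suc (Suc i)) = real (Suc (Suc i)) * (real (Suc i) * (fact i :: real))" by simp
  have 4: "fact (Suc i) = real (Suc i) * (fact i :: real)" by simp
  have 5: "fact (Suc k') = real (Suc k') * (fact k' :: real)" by simp
  have s1: "(-1::real) ^ (Suc (Suc i) + k') = (-1) ^ (i + k')" by simp
  have s2: "(-1::real) ^ (i + Suc k') = - ((-1) ^ (i + k'))" by simp
  have s3: "(-1::real) ^ (Suc i + Suc k') = (-1) ^ (i + k')" by simp
  have p1: "(2::real) ^ Suc (Suc i) = 4 * 2 ^ i" by simp
  have p2: "(2::real) ^ Suc i = 2 * 2 ^ i" by simp
  have F2: "fact (2 * Suc k' + i) = F" unfolding F_def ..
  show ?thesis
    unfolding hT_def 1 2 3 4 5 s1 s2 s3 p1 p2 F2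
    by (rule hT_alg) auto
qed

lemma coeff_her_iter:
  "(\<forall>j. j > m \<longrightarrow> coeff ((herD ^^ m) 1) j = 0) \<and>
   (\<forall>k i. m = 2 * k + i + 1 \<longrightarrow> coeff ((herD ^^ m) 1) i = 0) \<and>
   (\<forall>k i. m = 2 * k + i \<longrightarrow> coeff ((herD ^^ m) 1) i = hT k i)"
proof (induction m)
  case 0
  then show ?case by (auto simp: hT_def coeff_1)
next
  case (Suc m)
  let ?c = "\<lambda>j. coeff ((herD ^^ m) 1) j"
  have rec: "coeff (herD ((herD ^^ m) 1)) j = real (Suc j) * ?c (Suc j) - 2 * (case j of 0 \<Rightarrow> 0 | Suc i \<Rightarrow> ?c i)" for j
    by (simp add: coeff_herD)
  have Z: "?c j = 0" if "j > m" for j using Suc.IH that by blast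
  have O: "?c i = 0" if "m = 2 * k + i + 1" for k i using Suc.IH that by blast
  have E: "?c i = hT k i" if "m = 2 * k + i" for k i using Suc.IH that by blast
  have p1: "coeff ((herD ^^ Suc m) 1) j = 0" if "j > Suc m" for j
    using that by (auto simp: rec Z split: nat.split)
  have p2: "coeff ((herD ^^ Suc m) 1) i = 0" if "Suc m = 2 * k + i + 1" for k i
  proof -
    have a: "?c (Suc i) = 0"
    proof (cases k)
      case 0 then show ?thesis using that by (intro Z) simp
    next
      case (Suc k') then show ?thesis using that by (intro O[of k']) simp
    qed
    have b: "(case i of 0 \<Rightarrow> 0 | Suc i' \<Rightarrow> ?c i') = 0"
    proof (cases i)
      case (Suc i')
      then have "m = 2 * k + i' + 1" using that by simp
      from O[OF this] Suc show ?thesis by simp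
    qed simp
    show ?thesis by (simp add: rec a b)
  qed
  have p3: "coeff ((herD ^^ Suc m) 1) i = hT k i" if "Suc m = 2 * k + i" for k i
  proof (cases k)
    case 0
    then have i: "i = Suc m" using that by simp
    have "coeff ((herD ^^ Suc m) 1) i = - 2 * hT 0 m"
      using i by (simp add: rec Z E)
    then show ?thesis using 0 i by (simp add: hT_def)
  next
    case (Suc k')
    show ?thesis
    proof (cases i)
      case 0
      have m: "m = 2 * k' + 1" using that Suc 0 by simp
      have e1: "?c 1 = hT k' 1" using m by (intro E) simp
      have "coeff ((herD ^^ Suc m) 1) i = hT k' 1"
        using 0 e1 by (simp add: rec)
      also have "\<dots> = hT k i"
      proof -
        have g1: "fact (2 * k' + 1) = real (2 * k' + 1) * (fact (2 * k') :: real)" by simp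
        have g2: "fact (2 * k + 0) = real (2 * k' + 2) * (real (2 * k' + 1) * (fact (2 * k') :: real))"
          using Suc by (simp add: algebra_simps)
        have g3: "fact k = real (k' + 1) * (fact k' :: real)" using Suc by simp
        have nz: "fact k' + fact k' * real k' \<noteq> (0::real)"
          by (smt (verit) fact_gt_zero mult_nonneg_nonneg of_nat_0_le_iff fact_ge_zero)
        show ?thesis unfolding hT_def 0 g2 g3 using g1 nz
          by (simp add: field_simps Suc)
      qed
      finally show ?thesis .
    next
      case (Suc i')
      have m1: "m = 2 * k' + Suc (Suc i')" using that \<open>k = Suc k'\<close> Suc by simp
      have m2: "m = 2 * k + i'" using that Suc by simp
      have "coeff ((herD ^^ Suc m) 1) i = real (Suc (Suc i')) * hT k' (Suc (Suc i')) - 2 * hT k i'"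
        using Suc E[OF m1] E[OF m2] by (simp add: rec)
      also have "\<dots> = hT k i"
        using hT_step[of i' k'] Suc \<open>k = Suc k'\<close> by simp
      finally show ?thesis .
    qed
  qed
  show ?case using p1 p2 p3 by blast
qed

lemma hermite_poly_even:
  "hermite_poly (2 * n) x = (\<Sum>i\<le>n. hT (n - i) (2 * i) * x ^ (2 * i))"
proof -
  have fn: "(\<lambda>s::real. exp (- (s^2))) = (\<lambda>s. exp (- (s^2)) * poly 1 s)" by simp
  have "hermite_poly (2 * n) x = exp (x^2) * (exp (- (x^2)) * poly ((herD ^^ (2 * n)) 1) x)"
    unfolding hermite_poly_def fn deriv_her_iter by simp
  also have "\<dots> = poly ((herD ^^ (2 * n)) 1) x"
    by (simp add: exp_minus)
  also have "\<dots> = (\<Sum>j\<le>2 * n. coeff ((herD ^^ (2 * n)) 1) j * x ^ j)"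
    using coeff_her_iter[of "2 * n"] by (intro poly_sum_le) blast
  also have "\<dots> = (\<Sum>j\<in>(\<lambda>i. 2 * i) ` {..n}. coeff ((herD ^^ (2 * n)) 1) j * x ^ j)"
  proof (intro sum.mono_neutral_right)
    show "(\<lambda>i. 2 * i) ` {..n} \<subseteq> {..2 * n}" by auto
    show "\<forall>j\<in>{..2 * n} - (\<lambda>i. 2 * i) ` {..n}. coeff ((herD ^^ (2 * n)) 1) j * x ^ j = 0"
    proof
      fix j assume j: "j \<in> {..2 * n} - (\<lambda>i. 2 * i) ` {..n}"
      then have "odd j" by (auto elim!: evenE)
      then obtain j' where "j = 2 * j' + 1" by (auto elim!: oddE)
      with j have "2 * n = 2 * (n - j' - 1) + j + 1" by auto
      then show "coeff ((herD ^^ (2 * n)) 1) j * x ^ j = 0"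
        using coeff_her_iter[of "2 * n"] by auto
    qed
  qed auto
  also have "\<dots> = (\<Sum>i\<le>n. coeff ((herD ^^ (2 * n)) 1) (2 * i) * x ^ (2 * i))"
    by (subst sum.reindex) (auto simp: inj_on_def)
  also have "\<dots> = (\<Sum>i\<le>n. hT (n - i) (2 * i) * x ^ (2 * i))"
  proof (intro sum.cong refl)
    fix i assume "i \<in> {..n}"
    then have "2 * n = 2 * (n - i) + 2 * i" by auto
    then show "coeff ((herD ^^ (2 * n)) 1) (2 * i) * x ^ (2 * i) = hT (n - i) (2 * i) * x ^ (2 * i)"
      using coeff_her_iter[of "2 * n"] by auto
  qed
  finally show ?thesis .
qed



definition gam :: "nat \<Rightarrow> real" where
  "gam m = (real m - 1 / 2) gchoose m"

lemma gam_poch: "gam m = pochhammer (1 / 2) m / fact m"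
  unfolding gam_def gbinomial_pochhammer' by (simp add: algebra_simps)

lemma fact_double_gam: "(fact (2 * n) :: real) = 4 ^ n * gam n * (fact n)^2"
  unfolding gam_poch fact_double by (simp add: power_mult power2_eq_square)

lemma gam_binom: "gam n = real ((2 * n) choose n) / 4 ^ n"
proof -
  have "real ((2 * n) choose n) = fact (2 * n) / (fact n * fact n)"
    using binomial_fact[of n "2 * n"] by simp
  then show ?thesis unfolding fact_double_gam by (simp add: power2_eq_square)
qed

lemma gam_nonneg: "0 \<le> gam n"
  unfolding gam_binom by simp

lemma gam_le1: "gam n \<le> 1"
proof -
  have "real ((2 * n) choose n) \<le> 2 ^ (2 * n)"
    using binomial_le_pow2[of "2 * n" n] by (metis of_nat_le_iff of_nat_numeral of_nat_power)
  also have "(2::real) ^ (2 * n) = 4 ^ n" by (simp add: power_mult)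
  finally show ?thesis unfolding gam_binom by simp
qed

lemma poch_half_gchoose: "pochhammer (c :: real) l / fact l = (-1) ^ l * ((- c) gchoose l)"
  by (simp add: gbinomial_pochhammer)

lemma gam_vdm:
  assumes "i \<le> k"
  shows "(\<Sum>n\<in>{i..k}. gam (k - n) * gam n * real (n choose i)) = gam i * real (k choose i)"
proof -
  define N where "N = k - i"
  have step1: "gam n * real (n choose i) = gam i * (pochhammer (real i + 1/2) (n - i) / fact (n - i))"
    if "i \<le> n" for n
  proof -
    have "pochhammer (1/2::real) n = pochhammer (1/2) i * pochhammer (1/2 + real i) (n - i)"
      by (rule pochhammer_product[OF that])
    moreover have "real (n choose i) = fact n / (fact i * fact (n - i))"
      using binomial_fact[OF that] by simp
    ultimately show ?thesis unfolding gam_poch by (simp add: field_simps)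
  qed
  have "(\<Sum>n\<in>{i..k}. gam (k - n) * gam n * real (n choose i))
      = gam i * (\<Sum>n\<in>{i..k}. gam (k - n) * (pochhammer (real i + 1/2) (n - i) / fact (n - i)))"
    by (simp add: sum_distrib_left step1 mult.assoc mult.left_commute)
  also have "(\<Sum>n\<in>{i..k}. gam (k - n) * (pochhammer (real i + 1/2) (n - i) / fact (n - i)))
      = (\<Sum>l\<in>{0..N}. gam (N - l) * (pochhammer (real i + 1/2) l / fact l))"
  proof -
    have eq: "{i..k} = (\<lambda>l. l + i) ` {0..N}" unfolding N_def using assms
      by (auto simp: image_iff intro!: exI[of _ "x - i" for x])
    show ?thesis unfolding eq
      by (subst sum.reindex) (auto simp: inj_on_def N_def add.commute intro!: sum.cong)
  qed
  also have "\<dots> = (\<Sum>l\<in>{0..N}. (-1) ^ N * (((- real i - 1/2) gchoose l) * ((- 1/2) gchoose (N - l))))"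
  proof (intro sum.cong refl)
    fix l assume l: "l \<in> {0..N}"
    have g: "gam (N - l) = (-1) ^ (N - l) * ((- 1/2) gchoose (N - l))"
      unfolding gam_poch poch_half_gchoose by simp
    have p: "pochhammer (real i + 1/2) l / fact l = (-1) ^ l * ((- real i - 1/2) gchoose l)"
      unfolding poch_half_gchoose by simp
    have s: "(-1::real) ^ (N - l) * (-1) ^ l = (-1) ^ N"
      using l by (simp flip: power_add)
    show "gam (N - l) * (pochhammer (real i + 1 / 2) l / fact l) =
         (- 1) ^ N * (((- real i - 1/2) gchoose l) * ((- 1/2) gchoose (N - l)))"
      unfolding g p using s by (simp add: algebra_simps)
  qed
  also have "\<dots> = (-1) ^ N * ((- real i - 1/2 + (- 1/2)) gchoose N)"
    by (simp add: sum_distrib_left[symmetric] gbinomial_Vandermonde)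
  also have "(- real i - 1/2 + (- 1/2)) gchoose N = (-1) ^ N * (pochhammer (real i + 1) N / fact N)"
    by (simp add: gbinomial_pochhammer algebra_simps)
  also have "pochhammer (real i + 1) N / fact N = real (k choose i)"
  proof -
    have "pochhammer (real i + 1) N / fact N = (real (i + N) gchoose N)"
      by (simp add: gbinomial_pochhammer' algebra_simps)
    also have "\<dots> = real ((i + N) choose N)" by (simp add: binomial_gbinomial)
    also have "(i + N) choose N = k choose i"
      unfolding N_def using assms by (simp add: binomial_symmetric[of i k])
    finally show ?thesis .
  qed
  finally show ?thesis by simp
qed



definition h1 :: "nat \<Rightarrow> real \<Rightarrow> real" where
  "h1 m t = inverse (sqrt (2 ^ m * fact m * sqrt pi)) * exp (- (t^2) / 2) * hermite_poly m t"

definition kap :: "nat \<Rightarrow> real" where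
  "kap n = (-1) ^ n * pi powr (1/4) * sqrt (fact (2 * n)) / (2 ^ n * fact n)"

lemma gam_pos: "0 < gam n"
  unfolding gam_binom by simp

lemma gam_nz [simp]: "gam n \<noteq> 0"
  using gam_pos[of n] by simp

lemma sqrt_sqrt_pi: "sqrt (sqrt pi) = pi powr (1/4)"
proof -
  have "sqrt (sqrt pi) = (pi powr (1/2)) powr (1/2)"
    by (simp add: powr_half_sqrt)
  also have "\<dots> = pi powr (1/4)" by (simp add: powr_powr)
  finally show ?thesis .
qed

lemma kap_h1: "kap n * h1 (2 * n) x = (-1) ^ n / (4 ^ n * fact n) * (exp (- (x^2) / 2) * hermite_poly (2 * n) x)"
proof -
  have "sqrt (2 ^ (2 * n) * fact (2 * n) * sqrt pi) = 2 ^ n * sqrt (fact (2 * n)) * pi powr (1/4)"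
    by (simp add: real_sqrt_mult sqrt_sqrt_pi power_mult real_sqrt_power)
  moreover have "pi powr (1/4) > 0" by simp
  moreover have "sqrt (fact (2 * n)) > 0" by simp
  ultimately show ?thesis unfolding kap_def h1_def
    by (simp add: field_simps power_mult flip: power_mult_distrib)
qed

lemma term_alg:
  fixes g gn gi fn fi fnmi s sn X :: real
  assumes "sn * sn = 1" "gi \<noteq> 0" "fi \<noteq> 0" "fnmi \<noteq> 0" "fn \<noteq> 0" "p4n \<noteq> 0" "p4i \<noteq> 0"
  shows "g * (sn / (p4n * fn)) * (sn * s * p4i * (p4n * gn * fn^2) / (fnmi * (p4i * gi * fi^2)) * X)
       = (g * gn * (fn / (fi * fnmi))) * (s * X / (gi * fi))"
proof -
  have "g * (sn / (p4n * fn)) * (sn * s * p4i * (p4n * gn * fn^2) / (fnmi * (p4i * gi * fi^2)) * X)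
      = (sn * sn) * (g * s * gn * fn * X / (fnmi * gi * fi^2))"
    using assms by (simp add: field_simps power2_eq_square)
  also have "\<dots> = (g * gn * (fn / (fi * fnmi))) * (s * X / (gi * fi))"
    using assms by (simp add: field_simps power2_eq_square)
  finally show ?thesis .
qed

lemma term_eq:
  assumes "i \<le> n"
  shows "gam (k - n) * ((-1) ^ n / (4 ^ n * fact n)) * (hT (n - i) (2 * i) * x ^ (2 * i))
       = (gam (k - n) * gam n * real (n choose i)) * ((-1) ^ i * (x^2) ^ i / (gam i * fact i))"
proof -
  have e1: "2 * i + (n - i) = n + i" using assms by simp
  have e2: "2 * (n - i) + 2 * i = 2 * n" using assms by simp
  have hT: "hT (n - i) (2 * i) = (-1) ^ n * (-1) ^ i * 4 ^ i * (4 ^ n * gam n * (fact n)^2)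
              / (fact (n - i) * (4 ^ i * gam i * (fact i)^2))"
    unfolding hT_def e1 e2 fact_double_gam[symmetric]
    by (simp add: power_add power_mult)
  have b: "real (n choose i) = fact n / (fact i * fact (n - i))"
    using binomial_fact[OF assms] by simp
  have "(-1::real) ^ n * (-1) ^ n = 1" by (simp flip: power_add)
  moreover have "gam i \<noteq> 0" using gam_pos[of i] by simp
  ultimately show ?thesis unfolding hT b
    by (subst term_alg) (auto simp: power_mult)
qed

lemma sum_triangle_swap:
  fixes k :: nat
  shows "(\<Sum>n\<le>k. \<Sum>i\<le>n. f n i) = (\<Sum>i\<le>k. \<Sum>n\<in>{i..k}. f n i)"
proof -
  have "(\<Sum>n\<le>k. \<Sum>i\<le>n. f n i) = (\<Sum>n\<in>{..k}. \<Sum>i\<in>{i\<in>{..k}. i \<le> n}. f n i)"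
  proof -
    have eq: "\<And>n. n \<le> k \<Longrightarrow> {i\<in>{..k}. i \<le> n} = {..n}" by auto
    show ?thesis using eq by (auto intro!: sum.cong)
  qed
  also have "\<dots> = (\<Sum>i\<in>{..k}. \<Sum>n\<in>{n\<in>{..k}. i \<le> n}. f n i)"
    by (rule sum.swap_restrict) auto
  also have "\<dots> = (\<Sum>i\<le>k. \<Sum>n\<in>{i..k}. f n i)"
    by (intro sum.cong refl) (auto intro: sum.cong)
  finally show ?thesis .
qed

lemma lag_her_1d:
  "laguerre_poly k (x^2) * exp (- (x^2) / 2) = (\<Sum>n\<le>k. gam (k - n) * kap n * h1 (2 * n) x)"
proof -
  have "(\<Sum>n\<le>k. gam (k - n) * kap n * h1 (2 * n) x)
      = (\<Sum>n\<le>k. gam (k - n) * ((-1) ^ n / (4 ^ n * fact n)) * hermite_poly (2 * n) x * exp (- (x^2) / 2))"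
  proof (intro sum.cong refl)
    fix n
    show "gam (k - n) * kap n * h1 (2 * n) x = gam (k - n) * ((-1) ^ n / (4 ^ n * fact n)) * hermite_poly (2 * n) x * exp (- (x^2) / 2)"
      unfolding mult.assoc kap_h1 by (simp add: ac_simps)
  qed
  also have "\<dots> = (\<Sum>n\<le>k. gam (k - n) * ((-1) ^ n / (4 ^ n * fact n)) * hermite_poly (2 * n) x) * exp (- (x^2) / 2)"
    by (simp add: sum_distrib_right)
  also have "(\<Sum>n\<le>k. gam (k - n) * ((-1) ^ n / (4 ^ n * fact n)) * hermite_poly (2 * n) x)
      = (\<Sum>n\<le>k. \<Sum>i\<le>n. gam (k - n) * ((-1) ^ n / (4 ^ n * fact n)) * (hT (n - i) (2 * i) * x ^ (2 * i)))"
    by (simp add: hermite_poly_even sum_distrib_left)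
  also have "\<dots> = (\<Sum>n\<le>k. \<Sum>i\<le>n. (gam (k - n) * gam n * real (n choose i)) * ((-1) ^ i * (x^2) ^ i / (gam i * fact i)))"
    by (intro sum.cong refl term_eq) simp
  also have "\<dots> = (\<Sum>i\<le>k. \<Sum>n\<in>{i..k}. (gam (k - n) * gam n * real (n choose i)) * ((-1) ^ i * (x^2) ^ i / (gam i * fact i)))"
    by (rule sum_triangle_swap)
  also have "\<dots> = (\<Sum>i\<le>k. (gam i * real (k choose i)) * ((-1) ^ i * (x^2) ^ i / (gam i * fact i)))"
  proof (intro sum.cong refl)
    fix i assume i: "i \<in> {..k}"
    let ?c = "(-1) ^ i * (x^2) ^ i / (gam i * fact i)"
    have "(\<Sum>n\<in>{i..k}. (gam (k - n) * gam n * real (n choose i)) * ?c)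
        = (\<Sum>n\<in>{i..k}. gam (k - n) * gam n * real (n choose i)) * ?c"
      by (rule sum_distrib_right[symmetric])
    then show "(\<Sum>n\<in>{i..k}. (gam (k - n) * gam n * real (n choose i)) * ?c) = (gam i * real (k choose i)) * ?c"
      using gam_vdm[of i k] i by simp
  qed
  also have "\<dots> = laguerre_poly k (x^2)"
    unfolding laguerre_poly_explicit
    using gam_pos by (intro sum.cong refl) (simp add: field_simps)
  finally show ?thesis by simp
qed



definition Gm :: "('d::finite \<Rightarrow> nat) \<Rightarrow> real" where
  "Gm k = (\<Prod>j\<in>UNIV. gam (k j))"

definition Km :: "('d::finite \<Rightarrow> nat) \<Rightarrow> real" where
  "Km n = (\<Prod>j\<in>UNIV. kap (n j))"

definition mbox :: "('d::finite \<Rightarrow> nat) \<Rightarrow> ('d \<Rightarrow> nat) set" where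
  "mbox k = {m. \<forall>j. m j \<le> k j}"

lemma mbox_PiE: "mbox k = PiE UNIV (\<lambda>j. {..k j})"
  by (auto simp: mbox_def PiE_def Pi_def extensional_def)

lemma finite_mbox [simp]: "finite (mbox k)"
  unfolding mbox_PiE by (rule finite_PiE) auto

lemma hermite_fun_h1: "hermite_fun n x = (\<Prod>j\<in>UNIV. h1 (n j) (x j))"
  unfolding hermite_fun_def h1_def ..

lemma laguerre_vsq:
  "laguerre_fun k (vsq x) = (\<Sum>m\<in>mbox k. Gm (\<lambda>j. k j - m j) * Km m * hermite_fun (\<lambda>j. 2 * m j) x)"
proof -
  have "laguerre_fun k (vsq x) = (\<Prod>j\<in>UNIV. laguerre_poly (k j) ((x j)^2) * exp (- ((x j)^2) / 2))"
    unfolding laguerre_fun_def vsq_def by simp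
  also have "\<dots> = (\<Prod>j\<in>UNIV. \<Sum>n\<le>k j. gam (k j - n) * kap n * h1 (2 * n) (x j))"
    by (intro prod.cong refl) (rule lag_her_1d)
  also have "\<dots> = (\<Sum>m\<in>PiE UNIV (\<lambda>j. {..k j}). \<Prod>j\<in>UNIV. gam (k j - m j) * kap (m j) * h1 (2 * m j) (x j))"
    by (rule prod_sum_PiE) auto
  also have "\<dots> = (\<Sum>m\<in>mbox k. Gm (\<lambda>j. k j - m j) * Km m * hermite_fun (\<lambda>j. 2 * m j) x)"
    unfolding mbox_PiE Gm_def Km_def hermite_fun_h1 by (simp add: prod.distrib)
  finally show ?thesis .
qed

lemma sqrt_prod: "sqrt (\<Prod>j\<in>A. f j) = (\<Prod>j\<in>A. sqrt (f j))"
  by (induction A rule: infinite_finite_induct) (auto simp: real_sqrt_mult)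

lemma Km_eq:
  "Km (n :: 'd::finite \<Rightarrow> nat) = (-1) ^ mi_abs n * pi powr (real CARD('d) / 4) * sqrt (mi_fact (\<lambda>j. 2 * n j))
            / (2 ^ mi_abs n * mi_fact n)"
proof -
  have "pi powr (real CARD('d) / 4) = (\<Prod>j\<in>(UNIV::'d set). pi powr (1/4))"
    by (simp add: powr_power)
  then show ?thesis
    unfolding Km_def kap_def mi_abs_def mi_fact_def power_sum sqrt_prod
    by (simp add: prod.distrib prod_dividef)
qed



lemma summable_fact_powr:
  fixes E e :: real
  assumes E: "E > 0" and e: "e > 0"
  shows "(\<lambda>n::nat. E ^ n / fact n powr e) summable_on UNIV"
proof -
  define N where "N = nat \<lceil>(2 * E) powr (1 / e)\<rceil>"
  have "summable (\<lambda>n::nat. E ^ n / fact n powr e)"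
  proof (rule summable_ratio_test[where c = "1/2" and N = N])
    fix n assume n: "N \<le> n"
    have "(2 * E) powr (1 / e) \<le> real N" unfolding N_def by linarith
    also have "\<dots> \<le> real (Suc n)" using n by simp
    finally have "((2 * E) powr (1 / e)) powr e \<le> real (Suc n) powr e"
      using e by (intro powr_mono2) auto
    then have le: "2 * E \<le> real (Suc n) powr e"
      using E e by (simp add: powr_powr)
    have pos: "fact n powr e > (0::real)" by simp
    have sp: "real (Suc n) powr e > 0" by simp
    have "norm (E ^ Suc n / fact (Suc n) powr e) = E * E ^ n / (real (Suc n) powr e * fact n powr e)"
      using E by (simp add: powr_mult)
    also have "\<dots> \<le> 1 / 2 * (E ^ n / fact n powr e)"
      using le pos sp E by (simp add: field_simps)
    also have "\<dots> = 1 / 2 * norm (E ^ n / fact n powr e)"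
      using E by simp
    finally show "norm (E ^ Suc n / fact (Suc n) powr e) \<le> 1 / 2 * norm (E ^ n / fact n powr e)" .
  qed simp
  then have "summable (\<lambda>n::nat. norm (E ^ n / fact n powr e))"
    using E by simp
  then show ?thesis by (rule norm_summable_imp_summable_on)
qed

lemma summable_prod_fact_powr:
  fixes E e :: real
  assumes E: "E > 0" and e: "e > 0"
  shows "(\<lambda>k::'d::finite \<Rightarrow> nat. \<Prod>j\<in>UNIV. E ^ k j / fact (k j) powr e) summable_on UNIV"
proof -
  have eqn: "(\<lambda>n::nat. norm (E ^ n / fact n powr e)) = (\<lambda>n. E ^ n / fact n powr e)"
    using E by (auto simp: abs_of_nonneg)
  have "Infinite_Sum.abs_summable_on (\<lambda>n::nat. E ^ n / fact n powr e) UNIV"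
    unfolding eqn by (rule summable_fact_powr[OF E e])
  then have 1: "Infinite_Set_Sum.abs_summable_on (\<lambda>n::nat. E ^ n / fact n powr e) UNIV"
    by (rule abs_summable_equivalent[THEN iffD1])
  have "Infinite_Set_Sum.abs_summable_on (\<lambda>k::'d \<Rightarrow> nat. \<Prod>j\<in>UNIV. E ^ k j / fact (k j) powr e) (PiE UNIV (\<lambda>_. UNIV))"
    by (rule abs_summable_on_prod_PiE) (use 1 in auto)
  then have "Infinite_Sum.abs_summable_on (\<lambda>k::'d \<Rightarrow> nat. \<Prod>j\<in>UNIV. E ^ k j / fact (k j) powr e) UNIV"
    by (simp add: abs_summable_equivalent[symmetric])
  moreover have "\<And>k::'d \<Rightarrow> nat. norm (\<Prod>j\<in>UNIV. E ^ k j / fact (k j) powr e) = (\<Prod>j\<in>UNIV. E ^ k j / fact (k j) powr e)"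
    using E by (simp add: prod_nonneg)
  ultimately show ?thesis by simp
qed

lemma prod_fact_powr_eq:
  fixes E e :: real
  assumes "E > 0"
  shows "(\<Prod>j\<in>UNIV. E ^ k j / fact (k j) powr e) = E ^ mi_abs k / mi_fact k powr e"
  unfolding mi_abs_def mi_fact_def power_sum prod_powr_distrib
  by (simp add: prod_dividef)

lemma ell_flat_bound:
  assumes "\<sigma> > 0" "a \<in> ell_flat (\<sigma> / 2)"
  obtains h M where "h > 0" "M \<ge> 0"
    "\<And>k. norm (a k) \<le> M / (h ^ mi_abs k * mi_fact k powr (1 / \<sigma>))"
proof -
  from assms obtain h where h: "h > 0"
    and bdd: "bdd_above (range (\<lambda>n. norm (a n) * h ^ mi_abs n * mi_fact n powr (1 / (2 * (\<sigma> / 2)))))"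
    unfolding ell_flat_def by blast
  from bdd obtain M where M: "\<And>n. norm (a n) * h ^ mi_abs n * mi_fact n powr (1 / \<sigma>) \<le> M"
    using assms(1) by (auto simp: bdd_above_def)
  have M0: "M \<ge> 0" using M[of undefined] h by (smt (verit) mult_nonneg_nonneg norm_ge_zero powr_ge_zero zero_le_power)
  have "norm (a k) \<le> M / (h ^ mi_abs k * mi_fact k powr (1 / \<sigma>))" for k
  proof -
    have pos: "h ^ mi_abs k * mi_fact k powr (1 / \<sigma>) > 0"
      using h by (simp add: mi_fact_def prod_pos)
    show ?thesis using M[of k] pos by (simp add: field_simps)
  qed
  then show ?thesis using that h M0 by blast
qed

lemma summable_a_pow:
  assumes s: "\<sigma> > 0" and a: "a \<in> ell_flat (\<sigma> / 2)" and D: "D > 0"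
  shows "(\<lambda>k::'d::finite \<Rightarrow> nat. norm (a k) * D ^ mi_abs k) summable_on UNIV"
proof -
  obtain h M where h: "h > 0" and M: "M \<ge> 0"
    and bnd: "\<And>k. norm (a k) \<le> M / (h ^ mi_abs k * mi_fact k powr (1 / \<sigma>))"
    using ell_flat_bound[OF s a] by blast
  have sum: "(\<lambda>k::'d \<Rightarrow> nat. M * (\<Prod>j\<in>UNIV. (D / h) ^ k j / fact (k j) powr (1 / \<sigma>))) summable_on UNIV"
    using D h s by (intro summable_on_cmult_right summable_prod_fact_powr) auto
  show ?thesis
  proof (rule summable_on_comparison_test[OF sum])
    fix k :: "'d \<Rightarrow> nat"
    have mf: "mi_fact k powr (1 / \<sigma>) > 0" by (simp add: mi_fact_def prod_pos)
    have "norm (a k) * D ^ mi_abs k \<le> M / (h ^ mi_abs k * mi_fact k powr (1 / \<sigma>)) * D ^ mi_abs k"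
      using bnd[of k] D by (intro mult_right_mono) auto
    also have "\<dots> = M * ((D / h) ^ mi_abs k / mi_fact k powr (1 / \<sigma>))"
      by (simp add: power_divide)
    also have "\<dots> = M * (\<Prod>j\<in>UNIV. (D / h) ^ k j / fact (k j) powr (1 / \<sigma>))"
      using D h by (simp add: prod_fact_powr_eq)
    finally show "norm (a k) * D ^ mi_abs k \<le> M * (\<Prod>j\<in>UNIV. (D / h) ^ k j / fact (k j) powr (1 / \<sigma>))" .
  qed (use D in auto)
qed



lemma poch_half_ge: "1 \<le> 2 ^ i * pochhammer (1/2 :: real) i"
proof (induction i)
  case (Suc i)
  have "2 ^ Suc i * pochhammer (1/2 :: real) (Suc i) = (2 ^ i * pochhammer (1/2) i) * (1 + 2 * real i)"
    by (simp add: pochhammer_Suc field_simps)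
  also have "\<dots> \<ge> 1 * 1" using Suc by (intro mult_mono) auto
  finally show ?case by simp
qed simp

lemma inv_gam_fact: "1 / (gam i * fact i) \<le> 2 ^ i"
proof -
  have "gam i * fact i = pochhammer (1/2) i" unfolding gam_poch by simp
  moreover have "pochhammer (1/2 :: real) i > 0"
    by (simp add: pochhammer_pos)
  ultimately show ?thesis using poch_half_ge[of i] by (simp add: field_simps)
qed

lemma kap_h1_bound: "\<bar>kap n * h1 (2 * n) t\<bar> \<le> (1 + 2 * t^2) ^ n"
proof -
  have H: "(-1) ^ n / (4 ^ n * fact n) * hermite_poly (2 * n) t
      = (\<Sum>i\<le>n. gam n * real (n choose i) * ((-1) ^ i * (t^2) ^ i / (gam i * fact i)))"
  proof -
    have "(-1) ^ n / (4 ^ n * fact n) * hermite_poly (2 * n) t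
        = (\<Sum>i\<le>n. gam (n - n) * ((-1) ^ n / (4 ^ n * fact n)) * (hT (n - i) (2 * i) * t ^ (2 * i)))"
      by (simp add: hermite_poly_even sum_distrib_left gam_def)
    also have "\<dots> = (\<Sum>i\<le>n. (gam (n - n) * gam n * real (n choose i)) * ((-1) ^ i * (t^2) ^ i / (gam i * fact i)))"
      by (intro sum.cong refl term_eq) simp
    finally show ?thesis by (simp add: gam_def)
  qed
  have "\<bar>kap n * h1 (2 * n) t\<bar> = exp (- (t^2) / 2) * \<bar>(-1) ^ n / (4 ^ n * fact n) * hermite_poly (2 * n) t\<bar>"
    unfolding kap_h1 by (simp add: abs_mult)
  also have "\<dots> \<le> 1 * \<bar>(-1) ^ n / (4 ^ n * fact n) * hermite_poly (2 * n) t\<bar>"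
    by (intro mult_right_mono) auto
  also have "\<dots> \<le> (\<Sum>i\<le>n. \<bar>gam n * real (n choose i) * ((-1) ^ i * (t^2) ^ i / (gam i * fact i))\<bar>)"
    unfolding H mult_1 by (rule sum_abs)
  also have "\<dots> \<le> (\<Sum>i\<le>n. real (n choose i) * (2 * t^2) ^ i)"
  proof (intro sum_mono)
    fix i
    have "\<bar>gam n * real (n choose i) * ((-1) ^ i * (t^2) ^ i / (gam i * fact i))\<bar>
        = gam n * (real (n choose i) * (t^2) ^ i * (1 / (gam i * fact i)))"
      using gam_pos[of n] gam_pos[of i] by (simp add: abs_mult power_abs)
    also have "\<dots> \<le> 1 * (real (n choose i) * (t^2) ^ i * 2 ^ i)"
      using gam_le1[of n] gam_pos[of n] inv_gam_fact[of i] gam_pos[of i]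
      by (intro mult_mono mult_left_mono) (auto intro!: mult_nonneg_nonneg divide_nonneg_pos)
    also have "\<dots> = real (n choose i) * (2 * t^2) ^ i"
      by (simp add: power_mult_distrib)
    finally show "\<bar>gam n * real (n choose i) * ((-1) ^ i * (t^2) ^ i / (gam i * fact i))\<bar>
        \<le> real (n choose i) * (2 * t^2) ^ i" .
  qed
  also have "\<dots> = (2 * t^2 + 1) ^ n"
    by (simp add: binomial_ring)
  finally show ?thesis by (simp add: add.commute)
qed



definition Bx :: "('d::finite \<Rightarrow> real) \<Rightarrow> real" where
  "Bx x = 1 + 2 * (\<Sum>j\<in>UNIV. (x j)^2)"

lemma Bx_ge1: "Bx x \<ge> 1"
  unfolding Bx_def by (simp add: sum_nonneg)

lemma KH_bound: "\<bar>Km m * hermite_fun (\<lambda>j. 2 * m j) x\<bar> \<le> Bx x ^ mi_abs m"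
proof -
  have "\<bar>Km m * hermite_fun (\<lambda>j. 2 * m j) x\<bar> = (\<Prod>j\<in>UNIV. \<bar>kap (m j) * h1 (2 * m j) (x j)\<bar>)"
    unfolding Km_def hermite_fun_h1 by (simp add: prod.distrib[symmetric] abs_prod)
  also have "\<dots> \<le> (\<Prod>j\<in>UNIV. Bx x ^ m j)"
  proof (intro prod_mono conjI)
    fix j
    have "(x j)^2 \<le> (\<Sum>j\<in>UNIV. (x j)^2)"
      by (rule member_le_sum) auto
    then have "1 + 2 * (x j)^2 \<le> Bx x" unfolding Bx_def by simp
    then have "(1 + 2 * (x j)^2) ^ m j \<le> Bx x ^ m j"
      by (intro power_mono) auto
    then show "\<bar>kap (m j) * h1 (2 * m j) (x j)\<bar> \<le> Bx x ^ m j"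
      using kap_h1_bound[of "m j" "x j"] by linarith
  qed simp
  also have "\<dots> = Bx x ^ mi_abs m" unfolding mi_abs_def power_sum ..
  finally show ?thesis .
qed

lemma card_mbox: "real (card (mbox k)) \<le> 2 ^ mi_abs k"
proof -
  have "card (mbox k) = (\<Prod>j\<in>UNIV. card {..k j})"
    unfolding mbox_PiE by (simp add: card_PiE)
  also have "\<dots> = (\<Prod>j\<in>UNIV. Suc (k j))" by simp
  also have "\<dots> \<le> (\<Prod>j\<in>UNIV. 2 ^ k j)"
    by (intro prod_mono) (auto simp: Suc_le_eq less_exp)
  also have "\<dots> = 2 ^ mi_abs k" unfolding mi_abs_def power_sum ..
  finally have "card (mbox k) \<le> 2 ^ mi_abs k" .
  then show ?thesis by (metis of_nat_le_iff of_nat_numeral of_nat_power)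
qed

lemma Gm_bounds: "0 \<le> Gm k" "Gm k \<le> 1"
  unfolding Gm_def using gam_nonneg gam_le1 by (auto intro: prod_nonneg prod_le_1)

lemma fact_double_le: "(fact (2 * n) :: real) \<le> 4 ^ n * (fact n)^2"
proof -
  have "(fact (2 * n) :: real) = 4 ^ n * (fact n)^2 * gam n"
    unfolding fact_double_gam by (simp add: ac_simps)
  also have "\<dots> \<le> 4 ^ n * (fact n)^2 * 1"
    using gam_le1[of n] by (intro mult_left_mono) auto
  finally show ?thesis by simp
qed

lemma sqrt_fact_double_le: "sqrt (fact (2 * n)) \<le> 2 ^ n * (fact n :: real)"
proof -
  have e: "(2 ^ n * (fact n :: real))^2 = 4 ^ n * (fact n)^2"
  proof -
    have "(2 ^ n :: real)^2 = (2^2)^n" by (metis power_mult mult.commute)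
    then show ?thesis by (simp add: power_mult_distrib)
  qed
  have "sqrt (fact (2 * n)) \<le> sqrt ((2 ^ n * (fact n :: real))^2)"
    unfolding e by (rule real_sqrt_le_mono[OF fact_double_le])
  also have "\<dots> = 2 ^ n * fact n" by simp
  finally show ?thesis .
qed

lemma kap_abs: "\<bar>kap n\<bar> \<le> pi powr (1/4)"
proof -
  have p: "(2 ^ n * fact n :: real) > 0" by simp
  have "\<bar>kap n\<bar> = pi powr (1/4) * (sqrt (fact (2 * n)) / (2 ^ n * fact n))"
    unfolding kap_def by (simp add: abs_mult)
  also have "\<dots> \<le> pi powr (1/4) * 1"
    using sqrt_fact_double_le[of n] p by (intro mult_left_mono) auto
  finally show ?thesis by simp
qed

lemma Km_abs: "\<bar>Km (n :: 'd::finite \<Rightarrow> nat)\<bar> \<le> pi powr (real CARD('d) / 4)"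
proof -
  have "\<bar>Km n\<bar> = (\<Prod>j\<in>UNIV. \<bar>kap (n j)\<bar>)" unfolding Km_def by (simp add: abs_prod)
  also have "\<dots> \<le> (\<Prod>j\<in>(UNIV::'d set). pi powr (1/4))"
    by (intro prod_mono) (auto simp: kap_abs)
  also have "\<dots> = pi powr (real CARD('d) / 4)"
    by (simp add: powr_power)
  finally show ?thesis .
qed

lemma mi_fact_double: "mi_fact (\<lambda>j. 2 * m j) \<le> 4 ^ mi_abs m * (mi_fact m)^2"
proof -
  have "mi_fact (\<lambda>j. 2 * m j) = (\<Prod>j\<in>UNIV. fact (2 * m j))" unfolding mi_fact_def ..
  also have "\<dots> \<le> (\<Prod>j\<in>UNIV. 4 ^ m j * (fact (m j))^2)"
    by (intro prod_mono conjI fact_double_le) simp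
  also have "\<dots> = 4 ^ mi_abs m * (mi_fact m)^2"
    unfolding mi_abs_def mi_fact_def power_sum by (simp add: prod.distrib prod_power_distrib)
  finally show ?thesis .
qed



lemma fin_supp_summable:
  fixes f :: "'a \<Rightarrow> 'b::{comm_monoid_add, t2_space}"
  assumes "finite A" "\<And>x. x \<notin> A \<Longrightarrow> f x = 0"
  shows "f summable_on UNIV" "infsum f UNIV = sum f A"
proof -
  have "f summable_on A" using assms by simp
  moreover have "f summable_on A \<longleftrightarrow> f summable_on UNIV"
    by (rule summable_on_cong_neutral) (use assms in auto)
  ultimately show "f summable_on UNIV" by simp
  have "infsum f UNIV = infsum f A"
    by (rule infsum_cong_neutral) (use assms in auto)
  then show "infsum f UNIV = sum f A" using assms by simp
qed

lemma fact_add_ge: "fact a * fact b \<le> (fact (a + b) :: real)"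
proof -
  have "fact a * fact b * real ((a + b) choose a) = fact (a + b)"
    using binomial_fact_lemma[of a "a + b"] by (metis add_diff_cancel_left' le_add1 of_nat_fact of_nat_mult)
  moreover have "real ((a + b) choose a) \<ge> 1"
    by (metis binomial_eq_0_iff le_add1 less_one not_less of_nat_1 of_nat_le_iff linorder_not_le)
  moreover have "fact a * fact b > (0::real)" by simp
  ultimately show ?thesis
    by (metis mult_le_cancel_left1 mult.commute less_le_not_le)
qed

lemma mi_abs_add: "mi_abs (\<lambda>j. l j + n j) = mi_abs l + mi_abs n"
  unfolding mi_abs_def by (simp add: sum.distrib)

lemma mi_fact_add: "mi_fact l * mi_fact n \<le> mi_fact (\<lambda>j. l j + n j)"
  unfolding mi_fact_def prod.distrib[symmetric]
  by (intro prod_mono) (auto simp: fact_add_ge)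

lemma mi_fact_pos: "mi_fact n > 0"
  unfolding mi_fact_def by (simp add: prod_pos)

lemma mi_abs_mono: "m \<in> mbox k \<Longrightarrow> mi_abs m \<le> mi_abs k"
  unfolding mi_abs_def mbox_def by (auto intro: sum_mono)



lemma expansion:
  fixes \<sigma> :: real and a :: "('d::finite \<Rightarrow> nat) \<Rightarrow> complex" and f :: "('d \<Rightarrow> real) \<Rightarrow> complex"
    and b :: "('d \<Rightarrow> nat) \<Rightarrow> complex"
  assumes s: "\<sigma> > 0" and a: "a \<in> ell_flat (\<sigma> / 2)"
    and fa: "\<forall>x. (\<forall>j. 0 \<le> x j) \<longrightarrow>
           (\<lambda>n. norm (a n * complex_of_real (laguerre_fun n x))) summable_on UNIV \<and>
           f x = (\<Sum>\<^sub>\<infinity>n. a n * complex_of_real (laguerre_fun n x))"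
    and b: "\<And>n. b n = complex_of_real (Km n) * (\<Sum>\<^sub>\<infinity>k. a (\<lambda>j. k j + n j) * complex_of_real (Gm k))"
  shows "(\<lambda>n. b n * complex_of_real (hermite_fun (\<lambda>j. 2 * n j) x)) summable_on UNIV \<and>
         f (vsq x) = (\<Sum>\<^sub>\<infinity>n. b n * complex_of_real (hermite_fun (\<lambda>j. 2 * n j) x))"
proof -
  define H where "H m = hermite_fun (\<lambda>j. 2 * m j) x" for m :: "'d \<Rightarrow> nat"
  define T where "T k m = a k * complex_of_real (if m \<in> mbox k then Gm (\<lambda>j. k j - m j) * Km m * H m else 0)"
    for k m :: "'d \<Rightarrow> nat"
  have B1: "Bx x \<ge> 1" by (rule Bx_ge1)
  have T0: "T k m = 0" if "m \<notin> mbox k" for k m using that by (simp add: T_def)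
  have inner: "(\<lambda>m. norm (T k m)) summable_on UNIV" for k
    by (rule fin_supp_summable(1)[of "mbox k"]) (auto simp: T0)
  have innereq: "infsum (\<lambda>m. norm (T k m)) UNIV = (\<Sum>m\<in>mbox k. norm (T k m))" for k
    by (rule fin_supp_summable(2)) (auto simp: T0)
  have bound: "(\<Sum>m\<in>mbox k. norm (T k m)) \<le> norm (a k) * (2 * Bx x) ^ mi_abs k" for k
  proof -
    have "(\<Sum>m\<in>mbox k. norm (T k m)) \<le> (\<Sum>m\<in>mbox k. norm (a k) * Bx x ^ mi_abs k)"
    proof (intro sum_mono)
      fix m assume m: "m \<in> mbox k"
      have "\<bar>Gm (\<lambda>j. k j - m j) * (Km m * H m)\<bar> \<le> 1 * Bx x ^ mi_abs m"
        unfolding abs_mult H_def using Gm_bounds[of "\<lambda>j. k j - m j"] KH_bound[of m x]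
        by (intro mult_mono) auto
      also have "\<dots> \<le> Bx x ^ mi_abs k"
        using B1 mi_abs_mono[OF m] by (simp add: power_increasing)
      finally have "\<bar>Gm (\<lambda>j. k j - m j) * Km m * H m\<bar> \<le> Bx x ^ mi_abs k"
        by (simp add: mult.assoc)
      then show "norm (T k m) \<le> norm (a k) * Bx x ^ mi_abs k"
        using m unfolding T_def by (simp add: norm_mult mult_left_mono)
    qed
    also have "\<dots> = real (card (mbox k)) * (norm (a k) * Bx x ^ mi_abs k)" by simp
    also have "\<dots> \<le> 2 ^ mi_abs k * (norm (a k) * Bx x ^ mi_abs k)"
      using card_mbox[of k] B1 by (intro mult_right_mono) auto
    also have "\<dots> = norm (a k) * (2 * Bx x) ^ mi_abs k" by (simp add: power_mult_distrib)
    finally show ?thesis .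
  qed
  have outer: "(\<lambda>k. norm (infsum (\<lambda>m. norm (T k m)) UNIV)) summable_on UNIV"
  proof (rule summable_on_comparison_test[OF summable_a_pow[OF s a, of "2 * Bx x"]])
    fix k :: "'d \<Rightarrow> nat"
    have "0 \<le> infsum (\<lambda>m. norm (T k m)) UNIV" by (rule infsum_nonneg) simp
    then show "norm (infsum (\<lambda>m. norm (T k m)) UNIV) \<le> norm (a k) * (2 * Bx x) ^ mi_abs k"
      using bound[of k] by (simp add: innereq)
  qed (use B1 in auto)
  have "(\<lambda>p. norm ((\<lambda>(k, m). T k m) p)) summable_on Sigma UNIV (\<lambda>_. UNIV)"
    by (rule Infinite_Sum.abs_summable_on_Sigma_iff[THEN iffD2]) (use inner outer in auto)
  then have Tsum: "(\<lambda>(k, m). T k m) summable_on UNIV \<times> UNIV"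
    by (rule abs_summable_summable)
  have lag: "a k * complex_of_real (laguerre_fun k (vsq x)) = infsum (T k) UNIV" for k
  proof -
    have "infsum (T k) UNIV = (\<Sum>m\<in>mbox k. T k m)"
      by (rule fin_supp_summable(2)) (auto simp: T0)
    also have "\<dots> = (\<Sum>m\<in>mbox k. a k * complex_of_real (Gm (\<lambda>j. k j - m j) * Km m * H m))"
      by (intro sum.cong refl) (simp add: T_def)
    also have "\<dots> = a k * complex_of_real (laguerre_fun k (vsq x))"
      unfolding laguerre_vsq H_def by (simp add: sum_distrib_left)
    finally show ?thesis by simp
  qed
  have col: "infsum (\<lambda>k. T k m) UNIV = b m * complex_of_real (H m)" for m
  proof -
    define sh where "sh l = (\<lambda>j. l j + m j)" for l :: "'d \<Rightarrow> nat"
    have inj: "inj sh" unfolding sh_def inj_def by (auto simp: fun_eq_iff)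
    have "infsum (\<lambda>k. T k m) UNIV = infsum (\<lambda>k. T k m) (range sh)"
    proof (rule infsum_cong_neutral)
      fix k assume "k \<in> UNIV - range sh"
      have "m \<notin> mbox k"
      proof
        assume "m \<in> mbox k"
        then have "k = sh (\<lambda>j. k j - m j)" by (simp add: mbox_def sh_def fun_eq_iff)
        with \<open>k \<in> UNIV - range sh\<close> show False by blast
      qed
      then show "T k m = 0" by (rule T0)
    qed auto
    also have "\<dots> = infsum ((\<lambda>k. T k m) \<circ> sh) UNIV"
      by (rule infsum_reindex[OF inj])
    also have "\<dots> = infsum (\<lambda>l. a (\<lambda>j. l j + m j) * complex_of_real (Gm l) * complex_of_real (Km m * H m)) UNIV"
    proof (intro infsum_cong)
      fix l
      have "m \<in> mbox (sh l)" by (simp add: mbox_def sh_def)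
      moreover have "(\<lambda>j. sh l j - m j) = l" by (simp add: sh_def)
      ultimately show "((\<lambda>k. T k m) \<circ> sh) l = a (\<lambda>j. l j + m j) * complex_of_real (Gm l) * complex_of_real (Km m * H m)"
        by (simp add: T_def sh_def mult.assoc)
    qed
    also have "\<dots> = infsum (\<lambda>l. a (\<lambda>j. l j + m j) * complex_of_real (Gm l)) UNIV * complex_of_real (Km m * H m)"
      by (rule infsum_cmult_left')
    also have "\<dots> = b m * complex_of_real (H m)"
      by (simp add: b mult_ac)
    finally show ?thesis .
  qed
  have vx: "\<forall>j. 0 \<le> vsq x j" by (simp add: vsq_def)
  have "f (vsq x) = infsum (\<lambda>k. a k * complex_of_real (laguerre_fun k (vsq x))) UNIV"
    using fa vx by blast
  also have "\<dots> = infsum (\<lambda>k. infsum (\<lambda>m. T k m) UNIV) UNIV"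
    by (simp add: lag)
  also have "\<dots> = infsum (\<lambda>m. infsum (\<lambda>k. T k m) UNIV) UNIV"
    by (rule infsum_swap_banach) (use Tsum in simp)
  also have "\<dots> = infsum (\<lambda>m. b m * complex_of_real (H m)) UNIV"
    by (simp add: col)
  finally have eq: "f (vsq x) = infsum (\<lambda>m. b m * complex_of_real (H m)) UNIV" .
  have "(\<lambda>(m, k). T k m) summable_on UNIV \<times> UNIV"
    using Tsum summable_on_swap[of "\<lambda>(k, m). T k m" UNIV UNIV] by simp
  then have "(\<lambda>m. infsum (\<lambda>k. T k m) UNIV) summable_on UNIV"
    using summable_on_Sigma_banach[of "\<lambda>m k. T k m" UNIV "\<lambda>_. UNIV"] by simp
  then have summ: "(\<lambda>m. b m * complex_of_real (H m)) summable_on UNIV"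
    by (simp add: col)
  show ?thesis using eq summ unfolding H_def by simp
qed



lemma b_bound:
  fixes \<sigma> :: real and a :: "('d::finite \<Rightarrow> nat) \<Rightarrow> complex" and b :: "('d \<Rightarrow> nat) \<Rightarrow> complex"
  assumes s: "\<sigma> > 0" and a: "a \<in> ell_flat (\<sigma> / 2)"
    and b: "\<And>n. b n = complex_of_real (Km n) * (\<Sum>\<^sub>\<infinity>k. a (\<lambda>j. k j + n j) * complex_of_real (Gm k))"
  obtains C h where "h > 0" "C \<ge> 0" "\<And>n. norm (b n) \<le> C / (h ^ mi_abs n * mi_fact n powr (1 / \<sigma>))"
proof -
  obtain h M where h: "h > 0" and M: "M \<ge> 0"
    and bnd: "\<And>k. norm (a k) \<le> M / (h ^ mi_abs k * mi_fact k powr (1 / \<sigma>))"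
    using ell_flat_bound[OF s a] by blast
  define g where "g l = (\<Prod>j\<in>UNIV. (1 / h) ^ l j / fact (l j) powr (1 / \<sigma>))" for l :: "'d \<Rightarrow> nat"
  have gs: "g summable_on UNIV" unfolding g_def
    using h s by (intro summable_prod_fact_powr) auto
  have geq: "g l = (1 / h) ^ mi_abs l / mi_fact l powr (1 / \<sigma>)" for l
    unfolding g_def using h by (intro prod_fact_powr_eq) simp
  have g0: "g l \<ge> 0" for l unfolding geq using h by simp
  define S0 where "S0 = infsum g UNIV"
  have S0: "S0 \<ge> 0" unfolding S0_def by (rule infsum_nonneg) (use g0 in auto)
  define C where "C = pi powr (real CARD('d) / 4) * M * S0"
  have "norm (b n) \<le> C / (h ^ mi_abs n * mi_fact n powr (1 / \<sigma>))" for n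
  proof -
    define cn where "cn = M / (h ^ mi_abs n * mi_fact n powr (1 / \<sigma>))"
    have cn0: "cn \<ge> 0" unfolding cn_def using M h by simp
    have tb: "norm (a (\<lambda>j. l j + n j) * complex_of_real (Gm l)) \<le> cn * g l" for l
    proof -
      have "norm (a (\<lambda>j. l j + n j) * complex_of_real (Gm l)) \<le> norm (a (\<lambda>j. l j + n j)) * 1"
        unfolding norm_mult using Gm_bounds[of l] by (intro mult_left_mono) auto
      also have "\<dots> \<le> M / (h ^ mi_abs (\<lambda>j. l j + n j) * mi_fact (\<lambda>j. l j + n j) powr (1 / \<sigma>))"
        using bnd by simp
      also have "\<dots> \<le> M / ((h ^ mi_abs l * h ^ mi_abs n) * (mi_fact l powr (1 / \<sigma>) * mi_fact n powr (1 / \<sigma>)))"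
      proof -
        have pf: "mi_fact l powr (1 / \<sigma>) * mi_fact n powr (1 / \<sigma>) \<le> mi_fact (\<lambda>j. l j + n j) powr (1 / \<sigma>)"
        proof -
          have "mi_fact l powr (1 / \<sigma>) * mi_fact n powr (1 / \<sigma>) = (mi_fact l * mi_fact n) powr (1 / \<sigma>)"
            using mi_fact_pos[of l] mi_fact_pos[of n] by (simp add: powr_mult)
          also have "\<dots> \<le> mi_fact (\<lambda>j. l j + n j) powr (1 / \<sigma>)"
            using mi_fact_add[of l n] mi_fact_pos[of l] mi_fact_pos[of n] s
            by (intro powr_mono2) auto
          finally show ?thesis .
        qed
        have d1: "h ^ mi_abs (\<lambda>j. l j + n j) = h ^ mi_abs l * h ^ mi_abs n"
          by (simp add: mi_abs_add power_add)
        have pos: "0 < (h ^ mi_abs l * h ^ mi_abs n) * (mi_fact l powr (1 / \<sigma>) * mi_fact n powr (1 / \<sigma>))"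
          using h mi_fact_pos[of l] mi_fact_pos[of n] by simp
        have le: "(h ^ mi_abs l * h ^ mi_abs n) * (mi_fact l powr (1 / \<sigma>) * mi_fact n powr (1 / \<sigma>))
            \<le> h ^ mi_abs (\<lambda>j. l j + n j) * mi_fact (\<lambda>j. l j + n j) powr (1 / \<sigma>)"
          unfolding d1 using pf h by (intro mult_left_mono) auto
        show ?thesis by (rule divide_left_mono[OF le M pos[THEN less_le_trans[OF _ le], THEN mult_pos_pos[OF _ pos]]])
      qed
      also have "\<dots> = cn * g l"
        unfolding cn_def geq by (simp add: field_simps power_one_over)
      finally show ?thesis .
    qed
    have ns: "(\<lambda>l. norm (a (\<lambda>j. l j + n j) * complex_of_real (Gm l))) summable_on UNIV"
      by (rule summable_on_comparison_test[OF summable_on_cmult_right[OF gs, of cn]]) (use tb in auto)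
    have "norm (\<Sum>\<^sub>\<infinity>l. a (\<lambda>j. l j + n j) * complex_of_real (Gm l))
        \<le> (\<Sum>\<^sub>\<infinity>l. norm (a (\<lambda>j. l j + n j) * complex_of_real (Gm l)))"
      by (rule norm_infsum_bound) (use ns in simp)
    also have "\<dots> \<le> (\<Sum>\<^sub>\<infinity>l. cn * g l)"
      by (rule infsum_mono[OF ns summable_on_cmult_right[OF gs]]) (use tb in auto)
    also have "\<dots> = cn * S0" unfolding S0_def by (rule infsum_cmult_right') 
    finally have n1: "norm (\<Sum>\<^sub>\<infinity>l. a (\<lambda>j. l j + n j) * complex_of_real (Gm l)) \<le> cn * S0" .
    have "norm (b n) = \<bar>Km n\<bar> * norm (\<Sum>\<^sub>\<infinity>l. a (\<lambda>j. l j + n j) * complex_of_real (Gm l))"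
      unfolding b by (simp add: norm_mult)
    also have "\<dots> \<le> pi powr (real CARD('d) / 4) * (cn * S0)"
      using Km_abs[of n] n1 by (intro mult_mono) auto
    also have "\<dots> = C / (h ^ mi_abs n * mi_fact n powr (1 / \<sigma>))"
      unfolding C_def cn_def by simp
    finally show ?thesis .
  qed
  moreover have "C \<ge> 0" unfolding C_def using M S0 by simp
  ultimately show ?thesis using that h by blast
qed



lemma spread_ell:
  fixes \<sigma> :: real and b :: "('d::finite \<Rightarrow> nat) \<Rightarrow> complex"
  assumes s: "\<sigma> > 0" and h: "h > 0" and C: "C \<ge> 0"
    and bb: "\<And>n. norm (b n) \<le> C / (h ^ mi_abs n * mi_fact n powr (1 / \<sigma>))"
  shows "(\<lambda>m. if \<exists>n. m = (\<lambda>j. 2 * n j) then b (\<lambda>j. m j div 2) else 0) \<in> ell_flat \<sigma>"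
proof -
  define e where "e = 1 / (2 * \<sigma>)"
  have e0: "e > 0" unfolding e_def using s by simp
  define q where "q = 4 powr e"
  have q0: "q > 0" unfolding q_def by simp
  define h' where "h' = sqrt (h / q)"
  have h'0: "h' > 0" unfolding h'_def using h q0 by simp
  have h'2: "h'^2 = h / q" unfolding h'_def using h q0 by simp
  have "norm (if \<exists>n. m = (\<lambda>j. 2 * n j) then b (\<lambda>j. m j div 2) else 0) * h' ^ mi_abs m * mi_fact m powr e \<le> C"
    for m :: "'d \<Rightarrow> nat"
  proof (cases "\<exists>n. m = (\<lambda>j. 2 * n j)")
    case False
    then show ?thesis using C by simp
  next
    case True
    then obtain n where m: "m = (\<lambda>j. 2 * n j)" by blast
    have mn: "(\<lambda>j. m j div 2) = n" unfolding m by simp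
    define N where "N = mi_abs n"
    define R where "R = mi_fact n powr (1 / \<sigma>)"
    have R0: "R > 0" unfolding R_def using mi_fact_pos[of n] by simp
    have am: "mi_abs m = 2 * N" unfolding m N_def mi_abs_def by (simp add: sum_distrib_left)
    have hp: "h' ^ mi_abs m = h ^ N / q ^ N"
      unfolding am power_mult h'2 by (simp add: power_divide)
    have fm: "mi_fact m powr e \<le> q ^ N * R"
    proof -
      have "mi_fact m powr e \<le> (4 ^ N * (mi_fact n)^2) powr e"
        unfolding m N_def using mi_fact_double[of n] mi_fact_pos[of "\<lambda>j. 2 * n j"] e0
        by (intro powr_mono2) auto
      also have "\<dots> = (4 ^ N) powr e * ((mi_fact n)^2) powr e"
        by (simp add: powr_mult)
      also have "(4 ^ N :: real) powr e = q ^ N"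
      proof -
        have "(4 ^ N :: real) = 4 powr real N" by (simp add: powr_realpow)
        moreover have "(4 powr e :: real) ^ N = 4 powr (real N * e)" by (rule powr_power) simp
        moreover have "((4::real) powr real N) powr e = 4 powr (real N * e)" by (simp add: powr_powr)
        ultimately show ?thesis unfolding q_def by simp
      qed
      also have "((mi_fact n)^2) powr e = R"
      proof -
        have "mi_fact n powr (real 2) = (mi_fact n)^2"
          by (rule powr_realpow) (rule mi_fact_pos)
        then have "(mi_fact n)^2 = mi_fact n powr 2" by simp
        then show ?thesis unfolding R_def e_def using s by (simp add: powr_powr)
      qed
      finally show ?thesis .
    qed
    have "norm (b n) * (h ^ N / q ^ N) * mi_fact m powr e \<le> (C / (h ^ N * R)) * (h ^ N / q ^ N) * (q ^ N * R)"
      using bb[of n] fm h q0 R0 C unfolding N_def[symmetric] R_def[symmetric]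
      by (intro mult_mono) auto
    also have "\<dots> = C" using h q0 R0 by (simp add: field_simps)
    finally show ?thesis using True unfolding mn hp by simp
  qed
  then have "bdd_above (range (\<lambda>m. norm (if \<exists>n. m = (\<lambda>j. 2 * n j) then b (\<lambda>j. m j div 2) else 0) * h' ^ mi_abs m * mi_fact m powr (1 / (2 * \<sigma>))))"
    unfolding e_def by (intro bdd_aboveI) auto
  then show ?thesis unfolding ell_flat_def using h'0 by blast
qed



lemma spread_sum:
  fixes b :: "('d::finite \<Rightarrow> nat) \<Rightarrow> complex"
  defines "c \<equiv> (\<lambda>m. if \<exists>n. m = (\<lambda>j. 2 * n j) then b (\<lambda>j. m j div 2) else 0)"
  shows "((\<lambda>m. c m * complex_of_real (hermite_fun m x)) summable_on UNIV \<longleftrightarrow>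
          (\<lambda>n. b n * complex_of_real (hermite_fun (\<lambda>j. 2 * n j) x)) summable_on UNIV)
       \<and> (\<Sum>\<^sub>\<infinity>m. c m * complex_of_real (hermite_fun m x)) =
         (\<Sum>\<^sub>\<infinity>n. b n * complex_of_real (hermite_fun (\<lambda>j. 2 * n j) x))"
proof -
  define dbl where "dbl n = (\<lambda>j. 2 * n j)" for n :: "'d \<Rightarrow> nat"
  define F where "F m = c m * complex_of_real (hermite_fun m x)" for m
  have inj: "inj dbl" unfolding dbl_def inj_def by (auto simp: fun_eq_iff)
  have F0: "F m = 0" if "m \<in> UNIV - range dbl" for m
    using that unfolding F_def c_def dbl_def by auto
  have Fd: "(F \<circ> dbl) n = b n * complex_of_real (hermite_fun (\<lambda>j. 2 * n j) x)" for n
  proof -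
    have "\<exists>n'. dbl n = (\<lambda>j. 2 * n' j)" unfolding dbl_def by blast
    moreover have "(\<lambda>j. dbl n j div 2) = n" unfolding dbl_def by simp
    ultimately show ?thesis unfolding F_def c_def by (simp add: dbl_def)
  qed
  have "F summable_on UNIV \<longleftrightarrow> F summable_on range dbl"
    by (rule summable_on_cong_neutral) (use F0 in auto)
  also have "\<dots> \<longleftrightarrow> (F \<circ> dbl) summable_on UNIV"
    by (rule summable_on_reindex[OF inj])
  finally have 1: "F summable_on UNIV \<longleftrightarrow> (F \<circ> dbl) summable_on UNIV" .
  have "infsum F UNIV = infsum F (range dbl)"
    by (rule infsum_cong_neutral) (use F0 in auto)
  also have "\<dots> = infsum (F \<circ> dbl) UNIV"
    by (rule infsum_reindex[OF inj])
  finally have 2: "infsum F UNIV = infsum (F \<circ> dbl) UNIV" .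
  have e: "F \<circ> dbl = (\<lambda>n. b n * complex_of_real (hermite_fun (\<lambda>j. 2 * n j) x))"
    using Fd by (simp add: fun_eq_iff del: comp_apply)
  show ?thesis using 1 2 unfolding e F_def by simp
qed

theorem theorem6p4:
  fixes \<sigma> :: real
    and a :: "('d::finite \<Rightarrow> nat) \<Rightarrow> complex"
    and f :: "('d \<Rightarrow> real) \<Rightarrow> complex"
    and b :: "('d \<Rightarrow> nat) \<Rightarrow> complex"
  assumes "\<sigma> > 0"
    and "a \<in> ell_flat (\<sigma> / 2)"
    and "\<forall>x. (\<forall>j. 0 \<le> x j) \<longrightarrow>
           (\<lambda>n. norm (a n * complex_of_real (laguerre_fun n x))) summable_on UNIV \<and>
           f x = (\<Sum>\<^sub>\<infinity>n. a n * complex_of_real (laguerre_fun n x))"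
    and "\<forall>n. b n = complex_of_real
           ((-1) ^ mi_abs n * pi powr (real CARD('d) / 4) * sqrt (mi_fact (\<lambda>j. 2 * n j))
            / (2 ^ mi_abs n * mi_fact n))
         * (\<Sum>\<^sub>\<infinity>k. a (\<lambda>j. k j + n j)
              * complex_of_real (\<Prod>j\<in>UNIV. (real (k j) - 1 / 2) gchoose (k j)))"
  shows "f \<circ> vsq \<in> H_flat_even \<sigma>
    \<and> (\<lambda>m. if \<exists>n. m = (\<lambda>j. 2 * n j) then b (\<lambda>j. m j div 2) else 0) \<in> ell_flat \<sigma>
    \<and> (\<forall>x. (\<lambda>n. b n * complex_of_real (hermite_fun (\<lambda>j. 2 * n j) x)) summable_on UNIV
           \<and> (f \<circ> vsq) x = (\<Sum>\<^sub>\<infinity>n. b n * complex_of_real (hermite_fun (\<lambda>j. 2 * n j) x)))"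
proof -
  note s = assms(1) and a = assms(2) and fa = assms(3)
  have b: "\<And>n. b n = complex_of_real (Km n) * (\<Sum>\<^sub>\<infinity>k. a (\<lambda>j. k j + n j) * complex_of_real (Gm k))"
    using assms(4) by (simp add: Km_eq Gm_def gam_def)
  define c where "c = (\<lambda>m. if \<exists>n. m = (\<lambda>j. 2 * n j) then b (\<lambda>j. m j div 2) else 0)"
  have exp: "(\<lambda>n. b n * complex_of_real (hermite_fun (\<lambda>j. 2 * n j) x)) summable_on UNIV \<and>
         (f \<circ> vsq) x = (\<Sum>\<^sub>\<infinity>n. b n * complex_of_real (hermite_fun (\<lambda>j. 2 * n j) x))" for x
    using expansion[OF s a fa b] by simp
  obtain C h where h: "h > 0" and C: "C \<ge> 0"
    and bb: "\<And>n. norm (b n) \<le> C / (h ^ mi_abs n * mi_fact n powr (1 / \<sigma>))"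
    using b_bound[OF s a b] by blast
  have ell: "c \<in> ell_flat \<sigma>"
    unfolding c_def by (rule spread_ell[OF s h C bb])
  have H: "f \<circ> vsq \<in> H_flat \<sigma>"
    unfolding H_flat_def
  proof (intro CollectI bexI[OF _ ell] allI)
    fix x
    show "(\<lambda>n. c n * complex_of_real (hermite_fun n x)) summable_on UNIV \<and>
          (f \<circ> vsq) x = (\<Sum>\<^sub>\<infinity>n. c n * complex_of_real (hermite_fun n x))"
      using exp[of x] spread_sum[of b x] unfolding c_def by simp
  qed
  have ev: "(f \<circ> vsq) (x(j := - x j)) = (f \<circ> vsq) x" for x j
  proof -
    have "vsq (x(j := - x j)) = vsq x" by (auto simp: vsq_def fun_eq_iff)
    then show ?thesis by simp
  qed
  have "f \<circ> vsq \<in> H_flat_even \<sigma>"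
    unfolding H_flat_even_def using H ev by blast
  then show ?thesis using ell exp unfolding c_def by blast
qed

end
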